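(* Let $n_1,n_2,n_3$ be pairwise coprime positive integers forming a minimal system of generators of $\mathcal S=\langle n_1,n_2,n_3\rangle$. Then for every $\{i,j,k\}=\{1,2,3\}$, $$c_k=\min_{\alpha=1,\dots,I_k}\left\{\alpha n_j-[-n_in_k^{-1}]_{n_j}\left\lfloor \frac{\alpha n_k}{[n_in_j^{-1}]_{n_k}}\right\rfloor\right\},\qquad I_k=\left\lceil [-n_in_k^{-1}]_{n_j}\,\frac{[n_in_j^{-1}]_{n_k}}{n_i}\right\rceil .$$
   Context: $\mathbb N$ denotes the nonnegative integers. For integers $a_1,\dots,a_r$, $\langle a_1,\dots,a_r\rangle=\{\sum t_la_l: t_l\in\mathbb N\}$. Minimal system of generators means that no $n_l$ belongs to the monoid generated by the other two. For an integer $m$ and $n\ge 1$, $[m]_n\in\{0,\dots,n-1\}$ denotes the remainder of $m$ upon division by $n$; for $a$ coprime to $n$, the symbol $a^{-1}$ inside $[\cdot]_n$ denotes a multiplicative inverse of $a$ modulo $n$. For $\{i,j,k\}=\{1,2,3\}$, $\mathcal S_k=\{M\in\mathbb N: Mn_k\in\langle n_i,n_j\rangle\}$ and $c_k=\min(\mathcal S_k\setminus\{0\})$ (the minimal relation for $n_k$). *)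

theory Defs
  imports Complex_Main "HOL-Number_Theory.Cong"
begin

definition gen2 :: "nat \<Rightarrow> nat \<Rightarrow> nat set" where
  "gen2 a b = {s * a + t * b | s t. True}"

definition minimal_gens3 :: "nat \<Rightarrow> nat \<Rightarrow> nat \<Rightarrow> bool" where
  "minimal_gens3 a b c \<longleftrightarrow> a \<notin> gen2 b c \<and> b \<notin> gen2 a c \<and> c \<notin> gen2 a b"

definition Sset :: "(nat \<Rightarrow> nat) \<Rightarrow> nat \<Rightarrow> nat \<Rightarrow> nat \<Rightarrow> nat set" where
  "Sset n i j k = {M. M * n k \<in> gen2 (n i) (n j)}"

definition cmin :: "(nat \<Rightarrow> nat) \<Rightarrow> nat \<Rightarrow> nat \<Rightarrow> nat \<Rightarrow> nat" where
  "cmin n i j k = (LEAST M. M \<in> Sset n i j k \<and> M \<noteq> 0)"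

text \<open>A multiplicative inverse of a modulo m (some choice; the results below only use it inside [.]_m).\<close>
definition modinv :: "int \<Rightarrow> int \<Rightarrow> int" where
  "modinv a m = (SOME x. [a * x = 1] (mod m))"

end

theory Submission
  imports Defs
begin

lemma modinv_spec:
  assumes "coprime x (m::int)"
  shows "m dvd x * modinv x m - 1"
proof -
  have "\<exists>y. [x * y = 1] (mod m)" using cong_solve_coprime_int[OF assms] .
  hence "[x * modinv x m = 1] (mod m)" unfolding modinv_def by (rule someI_ex)
  thus ?thesis by (simp add: cong_iff_dvd_diff)
qed

lemma gen2_sym: "gen2 a b = gen2 b a"
  unfolding gen2_def by (auto; metis add.commute)

lemma div_sum_le: "((x::int) + y) div r \<le> x div r + y div r + 1" if "r > 0"
proof -
  let ?z = "x mod r + y mod r"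
  have z: "?z < 2 * r" "0 \<le> ?z" using that pos_mod_bound[of r x] pos_mod_bound[of r y] pos_mod_sign[of r x] pos_mod_sign[of r y] by linarith+
  have e: "r * (?z div r) + ?z mod r = ?z" by (rule mult_div_mod_eq)
  have "?z mod r \<ge> 0" using that by simp
  have "?z div r < 2"
  proof (rule ccontr)
    assume "\<not> ?z div r < 2"
    hence "r * 2 \<le> r * (?z div r)" using that by (intro mult_left_mono) auto
    thus False using e z \<open>?z mod r \<ge> 0\<close> by linarith
  qed
  thus ?thesis using div_add1_eq[of x y r] by simp
qed

lemma mod_rep:
  fixes X m :: int
  assumes "r = X mod m"
  shows "\<exists>k. r = X + m * k"
proof -
  have "X - m * (X div m) = X mod m" by (rule minus_mult_div_eq_mod)
  thus ?thesis using assms by (intro exI[of _ "- (X div m)"]) simp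
qed

lemma key_rel:
  fixes a b c :: nat and r1 r2 :: int
  assumes pos: "a>0" "b>0" "c>0" and cop: "coprime a b" "coprime a c" "coprime b c"
    and ng: "a \<notin> gen2 b c"
    and r1: "r1 = (- int a * modinv (int c) (int b)) mod int b"
    and r2: "r2 = (int a * modinv (int b) (int c)) mod int c"
  shows "int a + r1 * int c = r2 * int b" "0 < r1" "r1 < int b" "0 < r2" "r2 < int c"
proof -
  have b2: "b \<ge> 2"
  proof (rule ccontr)
    assume "\<not> b \<ge> 2" hence "b = 1" using pos by simp
    hence "a = a * b + 0 * c" by simp
    hence "a \<in> gen2 b c" unfolding gen2_def by blast
    thus False using ng by simp
  qed
  have c2: "c \<ge> 2"
  proof (rule ccontr)
    assume "\<not> c \<ge> 2" hence "c = 1" using pos by simp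
    hence "a = 0 * b + a * c" by simp
    hence "a \<in> gen2 b c" unfolding gen2_def by blast
    thus False using ng by simp
  qed
  have cb: "coprime (int c) (int b)" using cop by (simp add: coprime_commute)
  have bc: "coprime (int b) (int c)" using cop by simp
  have d1: "int b dvd int c * modinv (int c) (int b) - 1" using modinv_spec[OF cb] .
  have d2: "int c dvd int b * modinv (int b) (int c) - 1" using modinv_spec[OF bc] .
  have r1b: "0 \<le> r1" "r1 < int b" using r1 pos by auto
  have r2b: "0 \<le> r2" "r2 < int c" using r2 pos by auto
  show "r1 < int b" "r2 < int c" using r1b r2b by auto
  have r1c: "int b dvd r1 * int c + int a"
  proof -
    obtain k where k: "r1 = - int a * modinv (int c) (int b) + int b * k" using mod_rep[OF r1] by blast
    obtain l where l: "int c * modinv (int c) (int b) - 1 = int b * l" using d1 by (auto elim: dvdE)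
    have "r1 * int c + int a = int b * k * int c - int a * (int c * modinv (int c) (int b) - 1)"
      unfolding k by (simp add: algebra_simps)
    also have "\<dots> = int b * (k * int c - int a * l)" unfolding l by (simp add: algebra_simps)
    finally show ?thesis by simp
  qed
  have r2c: "int c dvd r2 * int b - int a"
  proof -
    obtain k where k: "r2 = int a * modinv (int b) (int c) + int c * k" using mod_rep[OF r2] by blast
    obtain l where l: "int b * modinv (int b) (int c) - 1 = int c * l" using d2 by (auto elim: dvdE)
    have "r2 * int b - int a = int c * k * int b + int a * (int b * modinv (int b) (int c) - 1)"
      unfolding k by (simp add: algebra_simps)
    also have "\<dots> = int c * (k * int b + int a * l)" unfolding l by (simp add: algebra_simps)
    finally show ?thesis by simp
  qed
  show "0 < r1"
  proof (rule ccontr)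
    assume "\<not> 0 < r1" hence "r1 = 0" using r1b by simp
    hence "int b dvd int a" using r1c by simp
    hence "int b dvd gcd (int a) (int b)" by simp
    thus False using cop b2 by (simp add: coprime_iff_gcd_eq_1)
  qed
  show "0 < r2"
  proof (rule ccontr)
    assume "\<not> 0 < r2" hence "r2 = 0" using r2b by simp
    hence "int c dvd int a" using r2c by simp
    hence "int c dvd gcd (int a) (int c)" by simp
    thus False using cop c2 by (simp add: coprime_iff_gcd_eq_1)
  qed
  obtain u where u: "r1 * int c + int a = int b * u" using r1c by (auto elim: dvdE)
  have "r1 * int c \<ge> 0" using r1b by simp
  hence "int b * u > 0" using u pos by linarith
  hence upos: "u > 0" using pos by (simp add: zero_less_mult_iff)
  have "int c dvd (u - r2) * int b"
  proof -
    have "(u - r2) * int b = r1 * int c - (r2 * int b - int a)" using u by (simp add: algebra_simps)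
    thus ?thesis using r2c by simp
  qed
  hence "int c dvd u - r2" using cb by (simp add: coprime_dvd_mult_left_iff)
  then obtain m where m: "u - r2 = int c * m" by (auto elim: dvdE)
  have "m = 0"
  proof (rule ccontr)
    assume "m \<noteq> 0"
    have "m \<ge> 0"
    proof (rule ccontr)
      assume "\<not> m \<ge> 0" hence "m \<le> -1" by simp
      hence "int c * m \<le> int c * (-1)" by (intro mult_left_mono) auto
      thus False using m upos r2b by simp
    qed
    hence m1: "m \<ge> 1" using \<open>m \<noteq> 0\<close> by simp
    define s where "s = nat (r2 + int c * (m - 1))"
    define t where "t = nat (int b - r1)"
    have "int c * (m - 1) \<ge> 0" using m1 by simp
    hence hs: "int s = r2 + int c * (m - 1)" unfolding s_def using r2b by simp
    have ht: "int t = int b - r1" unfolding t_def using r1b by simp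
    have ue: "u = r2 + int c * m" using m by simp
    have "int a = int b * u - r1 * int c" using u by simp
    also have "\<dots> = int s * int b + int t * int c"
      unfolding hs ht ue by (simp add: algebra_simps)
    finally have "int a = int (s * b + t * c)" by simp
    hence "a = s * b + t * c" by (simp only: of_nat_eq_iff)
    hence "a \<in> gen2 b c" unfolding gen2_def by blast
    thus False using ng by simp
  qed
  thus "int a + r1 * int c = r2 * int b" using u m by (simp add: algebra_simps)
qed


lemma core:
  fixes a b c :: nat and r1 r2 I :: int
  assumes pos: "a>0" "b>0" "c>0" and cop: "coprime a b" "coprime a c" "coprime b c"
    and ng: "a \<notin> gen2 b c"
    and r1: "r1 = (- int a * modinv (int c) (int b)) mod int b"
    and r2: "r2 = (int a * modinv (int b) (int c)) mod int c"
    and Idef: "I = \<lceil>real_of_int r1 * real_of_int r2 / real a\<rceil>"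
  shows "int (LEAST M. M \<in> {M. M * c \<in> gen2 a b} \<and> M \<noteq> 0) =
     Min {\<alpha> * int b - r1 * \<lfloor>real_of_int (\<alpha> * int c) / real_of_int r2\<rfloor> | \<alpha>. \<alpha> \<in> {1..I}}"
proof -
  note kr = key_rel[OF pos cop ng r1 r2]
  have key: "int a + r1 * int c = r2 * int b" and r1p: "0 < r1" and r1lt: "r1 < int b"
    and r2p: "0 < r2" and r2lt: "r2 < int c" using kr by auto
  have cb: "coprime (int b) (int c)" using cop by simp
  define f where "f \<alpha> = \<alpha> * int b - r1 * ((\<alpha> * int c) div r2)" for \<alpha>
  have fl: "\<lfloor>real_of_int (\<alpha> * int c) / real_of_int r2\<rfloor> = (\<alpha> * int c) div r2" for \<alpha>
    by (rule floor_divide_of_int_eq)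
  have set_eq: "{\<alpha> * int b - r1 * \<lfloor>real_of_int (\<alpha> * int c) / real_of_int r2\<rfloor> | \<alpha>. \<alpha> \<in> {1..I}} = f ` {1..I}"
    unfolding fl f_def by blast
  have qr: "r2 * ((\<alpha> * int c) div r2) + (\<alpha> * int c) mod r2 = \<alpha> * int c" for \<alpha>
    by (rule mult_div_mod_eq)
  have modnn: "0 \<le> (\<alpha> * int c) mod r2" for \<alpha> using r2p by simp
  have fpos: "\<alpha> * int a \<le> f \<alpha> * r2" if "\<alpha> \<ge> 1" for \<alpha>
  proof -
    have "r2 * ((\<alpha> * int c) div r2) \<le> \<alpha> * int c" using qr[of \<alpha>] modnn[of \<alpha>] by linarith
    hence "r1 * (r2 * ((\<alpha> * int c) div r2)) \<le> r1 * (\<alpha> * int c)" using r1p by (intro mult_left_mono) auto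
    hence "\<alpha> * int b * r2 - r1 * (\<alpha> * int c) \<le> f \<alpha> * r2" unfolding f_def by (simp add: algebra_simps)
    moreover have "\<alpha> * int b * r2 - r1 * (\<alpha> * int c) = \<alpha> * int a"
      using key by (simp add: algebra_simps) (metis distrib_left mult.commute add_diff_cancel_right')
    ultimately show ?thesis by simp
  qed
  have fpos2: "f \<alpha> > 0" if "\<alpha> \<ge> 1" for \<alpha>
  proof -
    have "\<alpha> * int a > 0" using that pos by simp
    hence "f \<alpha> * r2 > 0" using fpos[OF that] by linarith
    thus ?thesis using r2p by (simp add: zero_less_mult_iff)
  qed
  have fS: "nat (f \<alpha>) * c \<in> gen2 a b" if "\<alpha> \<ge> 1" for \<alpha>
  proof -
    define q where "q = (\<alpha> * int c) div r2"
    define \<rho> where "\<rho> = (\<alpha> * int c) mod r2"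
    have q0: "q \<ge> 0" unfolding q_def using r2p that by (simp add: pos_imp_zdiv_nonneg_iff)
    have rho0: "\<rho> \<ge> 0" unfolding \<rho>_def using modnn .
    have ac: "\<alpha> * int c = r2 * q + \<rho>" unfolding q_def \<rho>_def using qr by simp
    have ae: "int a = r2 * int b - r1 * int c" using key by simp
    have "f \<alpha> * int c = \<alpha> * int c * int b - r1 * q * int c" unfolding f_def q_def by (simp add: algebra_simps)
    also have "\<dots> = q * int a + \<rho> * int b" unfolding ac ae by (simp add: algebra_simps)
    finally have "int (nat (f \<alpha>) * c) = int (nat q * a + nat \<rho> * b)" using fpos2[OF that] q0 rho0 by simp
    hence "nat (f \<alpha>) * c = nat q * a + nat \<rho> * b" by (simp only: of_nat_eq_iff)
    thus ?thesis unfolding gen2_def by blast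
  qed
  have lower: "\<exists>\<alpha>\<ge>1. f \<alpha> \<le> int M" if M: "M * c \<in> gen2 a b" "M \<noteq> 0" for M
  proof -
    obtain s t where st: "M * c = s * a + t * b" using M(1) unfolding gen2_def by blast
    have "int M * int c = int s * int a + int t * int b" using st by (metis of_nat_add of_nat_mult)
    also have "\<dots> = int s * (r2 * int b - r1 * int c) + int t * int b"
      using key by (metis add_diff_cancel_right')
    finally have e: "int c * (int M + int s * r1) = int b * (int s * r2 + int t)" by (simp add: algebra_simps)
    hence "int b dvd int c * (int M + int s * r1)" by simp
    hence "int b dvd int M + int s * r1" using cb by (simp add: coprime_dvd_mult_right_iff)
    then obtain \<alpha> where al: "int M + int s * r1 = int b * \<alpha>" by (auto elim: dvdE)
    have "int b * (int c * \<alpha>) = int c * (int b * \<alpha>)" by (simp add: ac_simps)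
    also have "\<dots> = int c * (int M + int s * r1)" using al by simp
    also have "\<dots> = int b * (int s * r2 + int t)" using e .
    finally have "int b * (int c * \<alpha>) = int b * (int s * r2 + int t)" .
    hence ca: "int c * \<alpha> = int s * r2 + int t" using pos by simp
    have "int s * r1 \<ge> 0" using r1p by simp
    hence "int b * \<alpha> > 0" using al M(2) by linarith
    hence a1: "\<alpha> \<ge> 1" using pos by (simp add: zero_less_mult_iff)
    have "int s * r2 \<le> \<alpha> * int c" using ca by (simp add: algebra_simps)
    hence "(int s * r2) div r2 \<le> (\<alpha> * int c) div r2" using r2p by (intro zdiv_mono1) auto
    hence "int s \<le> (\<alpha> * int c) div r2" using r2p by simp
    hence "r1 * int s \<le> r1 * ((\<alpha> * int c) div r2)" using r1p by (intro mult_left_mono) auto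
    hence "f \<alpha> \<le> int M" unfolding f_def using al by (simp add: algebra_simps)
    thus ?thesis using a1 by blast
  qed
  have Ig1: "I \<ge> 1" unfolding Idef using r1p r2p pos by (simp add: one_le_ceiling)
  have big: "f \<alpha> > r1" if "\<alpha> \<ge> 1" "\<alpha> > I" for \<alpha>
  proof -
    have "real_of_int r1 * real_of_int r2 / real a \<le> real_of_int I" unfolding Idef by (rule le_of_int_ceiling)
    also have "\<dots> < real_of_int \<alpha>" using that by simp
    finally have "real_of_int r1 * real_of_int r2 < real_of_int \<alpha> * real a" using pos by (simp add: pos_divide_less_eq)
    hence "real_of_int (r1 * r2) < real_of_int (\<alpha> * int a)" by simp
    hence "r1 * r2 < \<alpha> * int a" by (simp only: of_int_less_iff)
    hence "r1 * r2 < f \<alpha> * r2" using fpos[OF that(1)] by linarith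
    thus ?thesis using r2p by (simp add: mult_less_cancel_right)
  qed
  have superadd: "f \<alpha> \<ge> f 1 + f (\<alpha> - 1) - r1" if "\<alpha> \<ge> 2" for \<alpha>
  proof -
    have "(\<alpha> * int c) div r2 = (int c + (\<alpha> - 1) * int c) div r2" by (simp add: algebra_simps)
    also have "\<dots> \<le> int c div r2 + ((\<alpha> - 1) * int c) div r2 + 1" using r2p by (rule div_sum_le)
    finally have "r1 * ((\<alpha> * int c) div r2) \<le> r1 * (int c div r2 + ((\<alpha> - 1) * int c) div r2 + 1)"
      using r1p by (intro mult_left_mono) auto
    thus ?thesis unfolding f_def by (simp add: algebra_simps)
  qed
  have descend: "\<exists>\<gamma>\<in>{1..I}. f \<gamma> \<le> f \<alpha>" if "\<alpha> \<ge> 1" for \<alpha>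
  proof (cases "\<alpha> \<le> I")
    case True thus ?thesis using that by auto
  next
    case False
    hence fa: "f \<alpha> > r1" using big that by simp
    have a2: "\<alpha> \<ge> 2" using False Ig1 that by simp
    show ?thesis
    proof (cases "f (\<alpha> - 1) \<ge> r1")
      case True
      hence "f 1 \<le> f \<alpha>" using superadd[OF a2] by simp
      thus ?thesis using Ig1 by auto
    next
      case False
      hence "\<alpha> - 1 \<le> I" using big[of "\<alpha> - 1"] a2 by force
      thus ?thesis using False fa a2 by (intro bexI[of _ "\<alpha> - 1"]) auto
    qed
  qed
  define P where "P M \<longleftrightarrow> M \<in> {M. M * c \<in> gen2 a b} \<and> M \<noteq> 0" for M
  have ex: "P (nat (f 1))" unfolding P_def using fS[of 1] fpos2[of 1] by simp
  define L where "L = (LEAST M. P M)"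
  have PL: "P L" unfolding L_def using ex by (rule LeastI)
  have Lle: "L \<le> M" if "P M" for M unfolding L_def using that by (rule Least_le)
  have fin: "finite (f ` {1..I})" by simp
  have ne: "f ` {1..I} \<noteq> {}" using Ig1 by auto
  have "Min (f ` {1..I}) \<le> int L"
  proof -
    obtain \<alpha> where a: "\<alpha> \<ge> 1" "f \<alpha> \<le> int L" using lower PL unfolding P_def by blast
    obtain \<gamma> where g: "\<gamma> \<in> {1..I}" "f \<gamma> \<le> f \<alpha>" using descend[OF a(1)] by blast
    have "Min (f ` {1..I}) \<le> f \<gamma>" using fin g(1) by simp
    thus ?thesis using a g by linarith
  qed
  moreover have "int L \<le> Min (f ` {1..I})"
  proof -
    have "Min (f ` {1..I}) \<in> f ` {1..I}" using fin ne by (rule Min_in)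
    then obtain \<gamma> where g: "\<gamma> \<in> {1..I}" "Min (f ` {1..I}) = f \<gamma>" by auto
    have "P (nat (f \<gamma>))" unfolding P_def using fS[of \<gamma>] fpos2[of \<gamma>] g(1) by simp
    hence "L \<le> nat (f \<gamma>)" by (rule Lle)
    thus ?thesis using g fpos2[of \<gamma>] by simp
  qed
  ultimately have "int L = Min (f ` {1..I})" by simp
  thus ?thesis unfolding set_eq L_def P_def .
qed


theorem mainTheorem4:
  fixes n :: "nat \<Rightarrow> nat" and i j k :: nat
  assumes pos: "n 1 > 0" "n 2 > 0" "n 3 > 0"
    and cop: "coprime (n 1) (n 2)" "coprime (n 1) (n 3)" "coprime (n 2) (n 3)"
    and mingen: "minimal_gens3 (n 1) (n 2) (n 3)"
    and ijk: "{i, j, k} = {1, 2, 3}"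
  shows
    "let r1 = (- int (n i) * modinv (int (n k)) (int (n j))) mod int (n j);
         r2 = (int (n i) * modinv (int (n j)) (int (n k))) mod int (n k);
         I = \<lceil>real_of_int r1 * real_of_int r2 / real (n i)\<rceil>
     in int (cmin n i j k) =
        Min {\<alpha> * int (n j) - r1 * \<lfloor>real_of_int (\<alpha> * int (n k)) / real_of_int r2\<rfloor> | \<alpha>. \<alpha> \<in> {1..I}}"
proof -
  have m: "n 1 \<notin> gen2 (n 2) (n 3)" "n 2 \<notin> gen2 (n 1) (n 3)" "n 3 \<notin> gen2 (n 1) (n 2)"
    using mingen unfolding minimal_gens3_def by auto
  have mem: "i = 1 \<or> i = 2 \<or> i = 3" "j = 1 \<or> j = 2 \<or> j = 3" "k = 1 \<or> k = 2 \<or> k = 3"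
    using ijk by blast+
  have cd: "card {i, j, k} = 3" using ijk by simp
  have dist: "i \<noteq> j" "i \<noteq> k" "j \<noteq> k"
    using cd by (auto simp: card_insert_if split: if_splits)
  have cases: "(i=1\<and>j=2\<and>k=3) \<or> (i=1\<and>j=3\<and>k=2) \<or> (i=2\<and>j=1\<and>k=3) \<or> (i=2\<and>j=3\<and>k=1) \<or> (i=3\<and>j=1\<and>k=2) \<or> (i=3\<and>j=2\<and>k=1)"
    using mem(1) mem(2) mem(3) dist by (elim disjE) simp_all
  have cop': "coprime (n 2) (n 1)" "coprime (n 3) (n 1)" "coprime (n 3) (n 2)"
    using cop by (simp_all add: coprime_commute)
  have m': "n 1 \<notin> gen2 (n 3) (n 2)" "n 2 \<notin> gen2 (n 3) (n 1)" "n 3 \<notin> gen2 (n 2) (n 1)"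
    using m gen2_sym by metis+
  have h: "n i > 0 \<and> n j > 0 \<and> n k > 0 \<and> coprime (n i) (n j) \<and> coprime (n i) (n k) \<and> coprime (n j) (n k)
      \<and> n i \<notin> gen2 (n j) (n k)"
    using cases
  proof (elim disjE conjE)
  qed (simp_all only: pos cop cop' m m' simp_thms)
  from h have h1: "n i > 0" "n j > 0" "n k > 0" "coprime (n i) (n j)" "coprime (n i) (n k)" "coprime (n j) (n k)"
      "n i \<notin> gen2 (n j) (n k)" by blast+
  show ?thesis unfolding Let_def cmin_def Sset_def
    by (rule core[OF h1 refl refl refl])
qed

end
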